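(* Let $\epsilon>0$, $n\ge1$, and let $\phi:\{0,1,\dots,n\}\to(0,1)$. The following are equivalent: (1) There exists $m\in(0,1)$ such that $\phi_0=m$ and $\phi_x=\min\{e^\epsilon\phi_{x-1},\,1-e^{-\epsilon}(1-\phi_{x-1})\}$ for $x=1,\dots,n$. (2) There exists $m\in(0,1)$ such that $\phi_0=m$ and for $x=1,\dots,n$, $\phi_x=e^\epsilon\phi_{x-1}$ if $\phi_{x-1}\le\frac1{1+e^\epsilon}$ and $\phi_x=1-e^{-\epsilon}(1-\phi_{x-1})$ if $\phi_{x-1}>\frac1{1+e^\epsilon}$. (3) There exists $m\in\mathbb{R}$ such that $\phi_x=F_{N_0}(x-m)$ for $x=0,1,\dots,n$, where $N_0\sim\mathrm{Tulap}(0,b=e^{-\epsilon},0)$.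
   Context: Nearest integer function: $[t]$ is the integer nearest to $t$, with $[z+1/2]$ ($z\in\mathbb{Z}$) defined as the nearest even integer. For $b\in(0,1)$, $N_0\sim\mathrm{Tulap}(0,b,0)$ has cdf $F_{N_0}(x)=\frac{b^{-[x]}}{1+b}\big(b+(x-[x]+\tfrac12)(1-b)\big)$ for $x\le 0$ and $F_{N_0}(x)=1-\frac{b^{[x]}}{1+b}\big(b+([x]-x+\tfrac12)(1-b)\big)$ for $x>0$. *)

theory Defs
  imports Complex_Main
begin

definition nearest_int :: "real \<Rightarrow> int" where
  "nearest_int t =
     (if t - of_int \<lfloor>t\<rfloor> < 1/2 then \<lfloor>t\<rfloor>
      else if t - of_int \<lfloor>t\<rfloor> > 1/2 then \<lfloor>t\<rfloor> + 1
      else if even \<lfloor>t\<rfloor> then \<lfloor>t\<rfloor> else \<lfloor>t\<rfloor> + 1)"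

definition tulap_cdf :: "real \<Rightarrow> real \<Rightarrow> real" where
  "tulap_cdf b x =
     (if x \<le> 0
      then b powi (- nearest_int x) / (1 + b) * (b + (x - of_int (nearest_int x) + 1/2) * (1 - b))
      else 1 - b powi (nearest_int x) / (1 + b) * (b + (of_int (nearest_int x) - x + 1/2) * (1 - b)))"

end

theory Submission
  imports Defs
begin

definition TA :: "real \<Rightarrow> int \<Rightarrow> real \<Rightarrow> real" where
  "TA b k s = b powi (- k) / (1 + b) * (b + (s - of_int k + 1/2) * (1 - b))"
definition TB :: "real \<Rightarrow> int \<Rightarrow> real \<Rightarrow> real" where
  "TB b k s = 1 - b powi k / (1 + b) * (b + (of_int k - s + 1/2) * (1 - b))"

lemma ni_bound: "\<bar>s - of_int (nearest_int s)\<bar> \<le> 1/2"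
  unfolding nearest_int_def
  using floor_correct[of s] by (auto split: if_splits)

lemma TA_mid: assumes "b > 0" shows "TA b k (of_int k + 1/2) = TA b (k+1) (of_int k + 1/2)"
proof -
  have "b powi (- k) = b powi (-(k+1)) * b"
    using assms power_int_add_1[of b "-(k+1)"] by simp
  then show ?thesis unfolding TA_def by (simp add: field_simps)
qed

lemma TB_mid: assumes "b > 0" shows "TB b k (of_int k + 1/2) = TB b (k+1) (of_int k + 1/2)"
proof -
  have "b powi (k+1) = b powi k * b"
    using assms by (simp add: power_int_add_1)
  then show ?thesis unfolding TB_def by (simp add: field_simps)
qed

lemma F_any:
  assumes "b > 0" "\<bar>s - of_int k\<bar> \<le> 1/2"
  shows "tulap_cdf b s = (if s \<le> 0 then TA b k s else TB b k s)"
proof -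
  define j where "j = nearest_int s"
  have j: "\<bar>s - of_int j\<bar> \<le> 1/2" using ni_bound j_def by simp
  have "j = k \<or> (j = k + 1 \<and> s = of_int k + 1/2) \<or> (k = j + 1 \<and> s = of_int j + 1/2)"
  proof -
    have "\<bar>of_int j - of_int k\<bar> \<le> (1::real)" using j assms(2) by linarith
    then have "\<bar>j - k\<bar> \<le> 1" by linarith
    then have "j = k \<or> j = k + 1 \<or> k = j + 1" by linarith
    moreover have "j = k+1 \<Longrightarrow> s = of_int k + 1/2" using j assms(2) by simp
    moreover have "k = j+1 \<Longrightarrow> s = of_int j + 1/2" using j assms(2) by simp
    ultimately show ?thesis by blast
  qed
  moreover have "tulap_cdf b s = (if s \<le> 0 then TA b j s else TB b j s)"
    unfolding tulap_cdf_def TA_def TB_def j_def by simp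
  ultimately show ?thesis using TA_mid[OF assms(1)] TB_mid[OF assms(1)] by auto
qed

lemma powi_shift: fixes b :: real assumes "b > 0" shows "b powi (- k) = b powi (-(k+1)) * b"
  using assms power_int_add_1[of b "-(k+1)"] by simp

lemma L1:
  assumes b: "0 < b" "b < 1" and s: "s \<le> -1/2"
  shows "tulap_cdf b (s+1) * b = tulap_cdf b s"
proof (cases "s \<le> -1")
  case True
  define k where "k = nearest_int s"
  have k: "\<bar>s - of_int k\<bar> \<le> 1/2" using ni_bound k_def by simp
  have k1: "\<bar>(s+1) - of_int (k+1)\<bar> \<le> 1/2" using k by simp
  have "tulap_cdf b s = TA b k s" using F_any[OF b(1) k] s by simp
  moreover have "tulap_cdf b (s+1) = TA b (k+1) (s+1)" using F_any[OF b(1) k1] True by simp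
  moreover have "TA b k s = TA b (k+1) (s+1) * b"
    unfolding TA_def powi_shift[OF b(1), of k] by (simp add: field_simps)
  ultimately show ?thesis by simp
next
  case False
  have k: "\<bar>s - of_int (-1)\<bar> \<le> 1/2" using s False by simp
  have k1: "\<bar>(s+1) - of_int 0\<bar> \<le> 1/2" using s False by simp
  have "tulap_cdf b s = TA b (-1) s" using F_any[OF b(1) k] s by simp
  moreover have "tulap_cdf b (s+1) = TB b 0 (s+1)" using F_any[OF b(1) k1] False by simp
  moreover have "TB b 0 (s+1) * b = TA b (-1) s" unfolding TA_def TB_def using b
    by (simp add: field_simps)
  ultimately show ?thesis by simp
qed

lemma L2:
  assumes b: "0 < b" "b < 1" and s: "s \<ge> -1/2"
  shows "tulap_cdf b (s+1) = 1 - b * (1 - tulap_cdf b s)"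
proof (cases "s > 0")
  case True
  define k where "k = nearest_int s"
  have k: "\<bar>s - of_int k\<bar> \<le> 1/2" using ni_bound k_def by simp
  have k1: "\<bar>(s+1) - of_int (k+1)\<bar> \<le> 1/2" using k by simp
  have "tulap_cdf b s = TB b k s" using F_any[OF b(1) k] True by simp
  moreover have "tulap_cdf b (s+1) = TB b (k+1) (s+1)" using F_any[OF b(1) k1] True by simp
  moreover have "b powi (k+1) = b powi k * b" using b by (simp add: power_int_add_1)
  then have "TB b (k+1) (s+1) = 1 - b * (1 - TB b k s)"
    unfolding TB_def by (simp add: field_simps)
  ultimately show ?thesis by simp
next
  case False
  have k: "\<bar>s - of_int 0\<bar> \<le> 1/2" using s False by simp
  have k1: "\<bar>(s+1) - of_int 1\<bar> \<le> 1/2" using s False by simp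
  have "tulap_cdf b s = TA b 0 s" using F_any[OF b(1) k] False by simp
  moreover have "tulap_cdf b (s+1) = TB b 1 (s+1)" using F_any[OF b(1) k1] s by simp
  moreover have "TB b 1 (s+1) = 1 - b * (1 - TA b 0 s)" unfolding TA_def TB_def using b
    by (simp add: field_simps)
  ultimately show ?thesis by simp
qed

lemma L3a:
  assumes b: "0 < b" "b < 1" and s: "s \<le> -1/2"
  shows "tulap_cdf b s \<le> b / (1 + b)"
proof -
  define k where "k = nearest_int s"
  have k: "\<bar>s - of_int k\<bar> \<le> 1/2" using ni_bound k_def by simp
  have F: "tulap_cdf b s = TA b k s" using F_any[OF b(1) k] s by simp
  have "k \<le> 0" using k s by linarith
  then obtain j where j: "k = - int j" by (metis add.inverse_inverse neg_0_le_iff_le nonneg_eq_int)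
  define t where "t = s - of_int k + 1/2"
  have t: "0 \<le> t" "t \<le> 1" using k unfolding t_def abs_le_iff by auto
  have TA: "TA b k s = b ^ j / (1 + b) * (b + t * (1 - b))" unfolding TA_def t_def j by simp
  have br: "0 \<le> b + t * (1 - b)" "b + t * (1 - b) \<le> 1" using t b
    by (auto intro: add_nonneg_nonneg mult_nonneg_nonneg) (smt (verit) mult_left_le_one_le)
  show ?thesis
  proof (cases "j = 0")
    case True
    then have "t = 0" using t_def j s k by simp
    then show ?thesis using F TA True by simp
  next
    case False
    have "b ^ j \<le> b ^ 1" using False b by (intro power_decreasing) auto
    then have "b ^ j * (b + t * (1 - b)) \<le> b * 1"
      using br b by (intro mult_mono) auto
    then show ?thesis using F TA b by (simp add: divide_right_mono)
  qed
qed

lemma L3b: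
  assumes b: "0 < b" "b < 1" and s: "s > -1/2"
  shows "tulap_cdf b s > b / (1 + b)"
proof (cases "s \<le> 0")
  case True
  have k: "\<bar>s - of_int 0\<bar> \<le> 1/2" using s True by simp
  have "tulap_cdf b s = TA b 0 s" using F_any[OF b(1) k] True by simp
  moreover have "(s + 1/2) * (1 - b) > 0" using s b by simp
  ultimately show ?thesis unfolding TA_def using b by (simp add: divide_strict_right_mono)
next
  case False
  define k where "k = nearest_int s"
  have k: "\<bar>s - of_int k\<bar> \<le> 1/2" using ni_bound k_def by simp
  have F: "tulap_cdf b s = TB b k s" using F_any[OF b(1) k] False by simp
  have "k \<ge> 0" using k s by linarith
  then obtain j where j: "k = int j" by (metis nonneg_eq_int)
  define t where "t = of_int k - s + 1/2"
  have t: "0 \<le> t" "t \<le> 1" using k unfolding t_def abs_le_iff by auto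
  have TB: "TB b k s = 1 - b ^ j / (1 + b) * (b + t * (1 - b))" unfolding TB_def t_def j by simp
  have br: "0 \<le> b + t * (1 - b)" "b + t * (1 - b) \<le> 1" using t b
    by (auto intro: add_nonneg_nonneg mult_nonneg_nonneg) (smt (verit) mult_left_le_one_le)
  have "b ^ j * (b + t * (1 - b)) < 1"
  proof (cases "j = 0")
    case True
    then have "t < 1/2" using t_def j False by simp
    then have "t * (1 - b) < 1 * (1 - b)" using b by (intro mult_strict_right_mono) auto
    then show ?thesis using True by simp
  next
    case False
    have "b ^ j \<le> b ^ 1" using False b by (intro power_decreasing) auto
    then have "b ^ j * (b + t * (1 - b)) \<le> b * 1"
      using br b by (intro mult_mono) auto
    then show ?thesis using b by simp
  qed
  then have "b ^ j / (1 + b) * (b + t * (1 - b)) < 1 / (1 + b)" using b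
    by (simp add: divide_strict_right_mono)
  moreover have "1 - 1 / (1 + b) = b / (1 + b)" using b by (simp add: field_simps)
  ultimately show ?thesis using F TB by linarith
qed

lemma Frec:
  assumes b: "0 < b" "b < 1" and eb: "e * b = 1"
  shows "tulap_cdf b (s+1) = (if tulap_cdf b s \<le> 1 / (1 + e) then e * tulap_cdf b s
                              else 1 - b * (1 - tulap_cdf b s))"
proof -
  have e: "e = 1 / b" using eb b by (simp add: field_simps)
  have th: "1 / (1 + e) = b / (1 + b)" using b unfolding e by (simp add: field_simps)
  show ?thesis
  proof (cases "s \<le> -1/2")
    case True
    have c: "tulap_cdf b s \<le> 1 / (1 + e)" using L3a[OF b True] th by simp
    have "e * tulap_cdf b s = e * (tulap_cdf b (s+1) * b)" using L1[OF b True] by simp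
    also have "\<dots> = tulap_cdf b (s+1) * (e * b)" by (simp add: ac_simps)
    finally show ?thesis using c eb by simp
  next
    case False
    then have s': "-1/2 < s" by simp
    then have "\<not> tulap_cdf b s \<le> 1 / (1 + e)" using L3b[OF b s'] th by simp
    then show ?thesis using L2[OF b] s' by simp
  qed
qed

lemma E0:
  assumes b: "0 < b" "b < 1" and p: "b / (1+b) \<le> p" "p \<le> 1 / (1+b)"
  shows "\<exists>t. -1/2 \<le> t \<and> t \<le> 1/2 \<and> tulap_cdf b t = p"
proof -
  define t where "t = (p*(1+b) - b)/(1-b) - 1/2"
  have p1: "b \<le> p*(1+b)" "p*(1+b) \<le> 1" using p b by (auto simp: field_simps)
  have "0 \<le> (p*(1+b) - b)/(1-b)" using p1 b by simp
  moreover have "(p*(1+b) - b)/(1-b) \<le> 1" using p1 b by (simp add: field_simps)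
  ultimately have t: "-1/2 \<le> t" "t \<le> 1/2" unfolding t_def by linarith+
  have k: "\<bar>t - of_int 0\<bar> \<le> 1/2" using t by simp
  have nz: "1 - b \<noteq> 0" "1 + b \<noteq> 0" using b by auto
  have "(t + 1/2) * (1 - b) = p*(1+b) - b" unfolding t_def using nz by simp
  then have lin: "(b + (t + 1/2) * (1 - b)) / (1 + b) = p"
    using nz by (simp add: field_simps)
  have "tulap_cdf b t = p"
    using F_any[OF b(1) k] lin unfolding TA_def TB_def using b by (simp add: field_simps)
  then show ?thesis using t by blast
qed

lemma E1:
  assumes b: "0 < b" "b < 1"
  shows "\<forall>p. b^N * (b/(1+b)) \<le> p \<and> p \<le> 1/(1+b) \<longrightarrow> (\<exists>t. t \<le> 1/2 \<and> tulap_cdf b t = p)"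
proof (induction N)
  case 0
  then show ?case using E0[OF b] by fastforce
next
  case (Suc N)
  show ?case
  proof (intro allI impI)
    fix p assume p: "b^Suc N * (b/(1+b)) \<le> p \<and> p \<le> 1/(1+b)"
    show "\<exists>t. t \<le> 1/2 \<and> tulap_cdf b t = p"
    proof (cases "b/(1+b) \<le> p")
      case True
      then show ?thesis using E0[OF b] p by fastforce
    next
      case False
      have "b^N * (b/(1+b)) \<le> p / b" using p b by (simp add: field_simps)
      moreover have "p / b \<le> 1/(1+b)" using False b by (simp add: field_simps)
      ultimately obtain t' where t': "t' \<le> 1/2" "tulap_cdf b t' = p / b" using Suc by blast
      have "tulap_cdf b (t' - 1 + 1) * b = tulap_cdf b (t' - 1)" using L1[OF b, of "t'-1"] t' by simp
      then have "tulap_cdf b (t' - 1) = p" using t' b by simp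
      then show ?thesis using t' by (intro exI[of _ "t'-1"]) auto
    qed
  qed
qed

lemma E2:
  assumes b: "0 < b" "b < 1"
  shows "\<forall>p. b/(1+b) \<le> p \<and> p \<le> 1 - b^N * (b/(1+b)) \<longrightarrow> (\<exists>t. t \<ge> -1/2 \<and> tulap_cdf b t = p)"
proof (induction N)
  case 0
  have "1 - b/(1+b) = 1/(1+b)" using b by (simp add: field_simps)
  then show ?case using E0[OF b] by fastforce
next
  case (Suc N)
  show ?case
  proof (intro allI impI)
    fix p assume p: "b/(1+b) \<le> p \<and> p \<le> 1 - b^Suc N * (b/(1+b))"
    show "\<exists>t. t \<ge> -1/2 \<and> tulap_cdf b t = p"
    proof (cases "p \<le> 1/(1+b)")
      case True
      then show ?thesis using E0[OF b] p by fastforce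
    next
      case False
      define q where "q = 1 - (1-p)/b"
      have "(1-p)/b < 1/(1+b)" using False b by (simp add: field_simps)
      moreover have "1 - 1/(1+b) = b/(1+b)" using b by (simp add: field_simps)
      ultimately have "b/(1+b) \<le> q" unfolding q_def by linarith
      moreover have "q \<le> 1 - b^N * (b/(1+b))" using p b unfolding q_def by (simp add: field_simps)
      ultimately obtain t' where t': "t' \<ge> -1/2" "tulap_cdf b t' = q" using Suc by blast
      have "tulap_cdf b (t' + 1) = p" using L2[OF b t'(1)] t'(2) b unfolding q_def by simp
      then show ?thesis using t' by (intro exI[of _ "t'+1"]) auto
    qed
  qed
qed

lemma Fsurj:
  assumes b: "0 < b" "b < 1" and p: "0 < p" "p < 1"
  shows "\<exists>t. tulap_cdf b t = p"
proof -
  obtain N where N: "b ^ N < min p (1-p)" using real_arch_pow_inv[of "min p (1-p)" b] p b by auto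
  have "b/(1+b) \<le> 1" using b by simp
  then have "b^N * (b/(1+b)) \<le> b^N * 1" using b by (intro mult_left_mono) auto
  then have N1: "b^N * (b/(1+b)) < p" "b^N * (b/(1+b)) < 1 - p" using N by linarith+
  show ?thesis
  proof (cases "p \<le> 1/(1+b)")
    case True
    then show ?thesis using spec[OF E1[OF b, of N], of p] N1 by force
  next
    case False
    have "b/(1+b) \<le> 1/(1+b)" using b by (simp add: divide_right_mono)
    then show ?thesis using spec[OF E2[OF b, of N], of p] N1 False by force
  qed
qed

lemma minif:
  fixes e p :: real
  assumes "e > 1"
  shows "min (e * p) (1 - (1/e) * (1 - p)) = (if p \<le> 1/(1+e) then e * p else 1 - (1/e) * (1 - p))"
proof -
  have "e * p \<le> 1 - (1/e) * (1 - p) \<longleftrightarrow> e * e * p \<le> e - 1 + p"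
    using assms by (simp add: field_simps)
  also have "\<dots> \<longleftrightarrow> (e - 1) * ((e + 1) * p) \<le> (e - 1) * 1" by (simp add: algebra_simps)
  also have "\<dots> \<longleftrightarrow> (e + 1) * p \<le> 1" using assms by simp
  also have "\<dots> \<longleftrightarrow> p \<le> 1/(1+e)" using assms by (simp add: field_simps)
  finally show ?thesis by (auto simp: min_def)
qed

theorem lemma3:
  fixes \<epsilon> :: real and n :: nat and \<phi> :: "nat \<Rightarrow> real"
  assumes "\<epsilon> > 0" and "n \<ge> 1"
    and "\<forall>x\<le>n. 0 < \<phi> x \<and> \<phi> x < 1"
  shows "((\<exists>m. 0 < m \<and> m < 1 \<and> \<phi> 0 = m \<and>
             (\<forall>x\<in>{1..n}. \<phi> x = min (exp \<epsilon> * \<phi> (x - 1)) (1 - exp (- \<epsilon>) * (1 - \<phi> (x - 1)))))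
          \<longleftrightarrow>
          (\<exists>m. 0 < m \<and> m < 1 \<and> \<phi> 0 = m \<and>
             (\<forall>x\<in>{1..n}. \<phi> x = (if \<phi> (x - 1) \<le> 1 / (1 + exp \<epsilon>)
                                     then exp \<epsilon> * \<phi> (x - 1)
                                     else 1 - exp (- \<epsilon>) * (1 - \<phi> (x - 1))))))
       \<and>
         ((\<exists>m. 0 < m \<and> m < 1 \<and> \<phi> 0 = m \<and>
             (\<forall>x\<in>{1..n}. \<phi> x = (if \<phi> (x - 1) \<le> 1 / (1 + exp \<epsilon>)
                                     then exp \<epsilon> * \<phi> (x - 1)
                                     else 1 - exp (- \<epsilon>) * (1 - \<phi> (x - 1)))))
          \<longleftrightarrow>
          (\<exists>m::real. \<forall>x\<le>n. \<phi> x = tulap_cdf (exp (- \<epsilon>)) (real x - m)))"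
proof -
  define e where "e = exp \<epsilon>"
  define b where "b = exp (- \<epsilon>)"
  have b: "0 < b" "b < 1" unfolding b_def using assms(1) by auto
  have e1: "e > 1" unfolding e_def using assms(1) by simp
  have eb: "e * b = 1" unfolding e_def b_def by (simp add: exp_minus)
  have binv: "b = 1 / e" using eb e1 by (simp add: field_simps)
  define g where "g p = (if p \<le> 1 / (1 + e) then e * p else 1 - b * (1 - p))" for p
  have mg: "min (e * p) (1 - b * (1 - p)) = g p" for p
    unfolding g_def binv using minif[OF e1] by simp
  have rec: "tulap_cdf b (s+1) = g (tulap_cdf b s)" for s
    unfolding g_def using Frec[OF b eb] by simp
  have P1: "(\<exists>m. 0 < m \<and> m < 1 \<and> \<phi> 0 = m \<and> (\<forall>x\<in>{1..n}. \<phi> x = min (e * \<phi> (x - 1)) (1 - b * (1 - \<phi> (x - 1)))))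
     \<longleftrightarrow> (\<exists>m. 0 < m \<and> m < 1 \<and> \<phi> 0 = m \<and> (\<forall>x\<in>{1..n}. \<phi> x = g (\<phi> (x - 1))))"
    using mg by simp
  have P2: "(\<exists>m. 0 < m \<and> m < 1 \<and> \<phi> 0 = m \<and> (\<forall>x\<in>{1..n}. \<phi> x = g (\<phi> (x - 1))))
     \<longleftrightarrow> (\<exists>m::real. \<forall>x\<le>n. \<phi> x = tulap_cdf b (real x - m))"
  proof
    assume "\<exists>m. 0 < m \<and> m < 1 \<and> \<phi> 0 = m \<and> (\<forall>x\<in>{1..n}. \<phi> x = g (\<phi> (x - 1)))"
    then have H: "\<forall>x\<in>{1..n}. \<phi> x = g (\<phi> (x - 1))" by blast
    have "0 < \<phi> 0" "\<phi> 0 < 1" using assms(3) by auto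
    then obtain t where t: "tulap_cdf b t = \<phi> 0" using Fsurj[OF b] by blast
    have "x \<le> n \<longrightarrow> \<phi> x = tulap_cdf b (real x + t)" for x
    proof (induction x)
      case 0
      then show ?case using t by simp
    next
      case (Suc x)
      show ?case
      proof
        assume x: "Suc x \<le> n"
        have "\<phi> (Suc x) = g (\<phi> x)" using H x by force
        also have "\<dots> = g (tulap_cdf b (real x + t))" using Suc x by simp
        also have "\<dots> = tulap_cdf b (real x + t + 1)" using rec by simp
        finally show "\<phi> (Suc x) = tulap_cdf b (real (Suc x) + t)" by (simp add: ac_simps)
      qed
    qed
    then show "\<exists>m::real. \<forall>x\<le>n. \<phi> x = tulap_cdf b (real x - m)"
      by (intro exI[of _ "-t"]) simp
  next
    assume "\<exists>m::real. \<forall>x\<le>n. \<phi> x = tulap_cdf b (real x - m)"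
    then obtain m where m: "\<forall>x\<le>n. \<phi> x = tulap_cdf b (real x - m)" by blast
    have "\<forall>x\<in>{1..n}. \<phi> x = g (\<phi> (x - 1))"
    proof
      fix x assume x: "x \<in> {1..n}"
      have e1: "real x - m = (real (x - 1) - m) + 1" using x by (simp add: of_nat_diff)
      have "\<phi> x = tulap_cdf b (real x - m)" using m x by auto
      also have "\<dots> = tulap_cdf b ((real (x - 1) - m) + 1)" by (simp only: e1)
      also have "\<dots> = g (tulap_cdf b (real (x - 1) - m))" by (rule rec)
      also have "tulap_cdf b (real (x - 1) - m) = \<phi> (x - 1)" using m x by auto
      finally show "\<phi> x = g (\<phi> (x - 1))" .
    qed
    then show "\<exists>m. 0 < m \<and> m < 1 \<and> \<phi> 0 = m \<and> (\<forall>x\<in>{1..n}. \<phi> x = g (\<phi> (x - 1)))"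
      using assms(3) by auto
  qed
  show ?thesis using P1 P2 unfolding g_def e_def b_def by simp
qed

end
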